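(* Let $\mathbb F$ be any field, $n\ge k\ge 1$, and let $\mathcal K\subseteq M_{n\times k}(\mathbb F)$ be a linear variety such that $\det_{n,k}(X)=0$ for every $X\in\mathcal K$. Then $\operatorname{codim}(\mathcal K)\ge k$.
   Context: A linear variety in a finite-dimensional space $W$ is a nonempty set of the form $\mathbf s+V$ with $V\subseteq W$ a linear subspace (uniquely determined); $\operatorname{codim}\mathcal K=\dim W-\dim V$, here $W=M_{n\times k}(\mathbb F)$. Cullis' determinant: for $n\ge k$ and $X\in M_{n\times k}(\mathbb F)$, $\det_{n,k}(X)=\sum_{c}\operatorname{sgn}(c)\det\big(X[c|)\big)$, where $c$ ranges over the $k$-element subsets of $[n]$, $X[c|)$ is the $k\times k$ submatrix formed by the rows indexed by $c$ (in increasing order), and for $c=\{c(1)<\dots<c(k)\}$, $\operatorname{sgn}(c)=(-1)^{\sum_{\alpha=1}^k (c(\alpha)-\alpha)}$. *)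

theory Defs
  imports Jordan_Normal_Form.VS_Connect Jordan_Normal_Form.DL_Submatrix
begin

(* Matrices in M_{n x k}(F) are elements of carrier_mat n k (rows/columns indexed from 0).
   The F-vector space M_{n x k}(F) is  module_mat TYPE('a) n k  over  class_ring. *)

(* sgn(c) = (-1)^(sum_{alpha} (c(alpha) - alpha)), with c(0) < ... < c(k-1) the
   elements of c in increasing order (0-indexed; the sum is the same as 1-indexed). *)
definition cullis_sgn :: "nat set \<Rightarrow> nat \<Rightarrow> 'a :: comm_ring_1" where
  "cullis_sgn c k = (-1) ^ (\<Sum>\<alpha><k. pick c \<alpha> - \<alpha>)"

definition cullis_det :: "nat \<Rightarrow> nat \<Rightarrow> 'a :: comm_ring_1 mat \<Rightarrow> 'a" where
  "cullis_det n k X =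
     (\<Sum>c \<in> {c. c \<subseteq> {..<n} \<and> card c = k}. cullis_sgn c k * det (submatrix X c {..<k}))"

definition codim_mat :: "'a :: field itself \<Rightarrow> nat \<Rightarrow> nat \<Rightarrow> 'a mat set \<Rightarrow> nat" where
  "codim_mat ty n k V =
     n * k - vectorspace.dim (class_ring :: 'a ring) ((module_mat TYPE('a) n k)\<lparr>carrier := V\<rparr>)"

end

theory Submission
  imports Defs
begin

definition unitm :: "nat \<Rightarrow> nat \<Rightarrow> nat \<Rightarrow> nat \<Rightarrow> 'a :: {zero,one} mat" where
  "unitm n k i j = mat n k (\<lambda>(r,c). if r = i \<and> c = j then 1 else 0)"

definition pim :: "nat \<Rightarrow> nat \<Rightarrow> 'a mat \<Rightarrow> 'a mat" where
  "pim n k X = mat n k (\<lambda>(i,j). X $$ (i,j))"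

lemma pick_lessThan: "i < k \<Longrightarrow> pick {..<k} i = i"
proof -
  assume i: "i < k"
  have "card {a\<in>{..<k}. a < i} = i"
  proof -
    have "{a\<in>{..<k}. a < i} = {..<i}" using i by auto
    thus ?thesis by simp
  qed
  with pick_card_in_set[of i "{..<k}"] i show ?thesis by simp
qed

lemma card_sel: "c \<subseteq> {..<n} \<Longrightarrow> {i. i < n \<and> i \<in> c} = c" by auto

lemma sub_carrier:
  assumes X: "X \<in> carrier_mat n k" and c: "c \<subseteq> {..<n}" "card c = k"
  shows "submatrix X c {..<k} \<in> carrier_mat k k"
proof -
  have 1: "{i. i < dim_row X \<and> i \<in> c} = c" using X c by auto
  have 2: "{j. j < dim_col X \<and> j \<in> {..<k}} = {..<k}" using X by auto
  have 3: "dim_row (submatrix X c {..<k}) = k" using dim_submatrix(1)[of X c "{..<k}"] 1 c by simp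
  have 4: "dim_col (submatrix X c {..<k}) = k" using dim_submatrix(2)[of X c "{..<k}"] 2 by simp
  show ?thesis using 3 4 by auto
qed

lemma sub_index:
  assumes X: "X \<in> carrier_mat n k" and c: "c \<subseteq> {..<n}" "card c = k"
    and a: "a < k" and b: "b < k"
  shows "submatrix X c {..<k} $$ (a,b) = X $$ (pick c a, b)"
proof -
  have 1: "{i. i < dim_row X \<and> i \<in> c} = c" using X c by auto
  have 2: "{j. j < dim_col X \<and> j \<in> {..<k}} = {..<k}" using X by auto
  show ?thesis
    by (subst submatrix_index) (use a b c 1 2 pick_lessThan[OF b] in auto)
qed

lemma cdet_zero: "cullis_det n 0 X = (1 :: 'a :: comm_ring_1)"
proof -
  have "{c. c \<subseteq> {..<n} \<and> card c = 0} = {{}}"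
    by (auto dest: finite_subset[OF _ finite_lessThan])
  moreover have "submatrix X {} {..<0} = 1\<^sub>m 0"
    by (rule eq_matI) (auto simp: dim_submatrix)
  ultimately show ?thesis unfolding cullis_det_def cullis_sgn_def by simp
qed

lemma pick_insert_max:
  assumes c': "c' \<subseteq> {..<n}" "card c' = k" and a: "a < k"
  shows "pick (insert n c') a = pick c' a"
  using a
proof (induction a)
  case 0
  have fin: "finite c'" using c' finite_subset by blast
  have in0: "pick c' 0 \<in> c'" using pick_in_set_le[of 0 c'] 0 c' by auto
  show ?case unfolding pick.simps
  proof (rule Least_equality)
    show "(LEAST a. a \<in> c') \<in> insert n c'" using in0 by simp
    fix y assume "y \<in> insert n c'"
    then show "(LEAST a. a \<in> c') \<le> y"
    proof
      assume "y = n"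
      have "(LEAST a. a \<in> c') \<le> pick c' 0" by (simp add: Least_le in0)
      also have "pick c' 0 \<le> n" using in0 c' by auto
      finally show ?thesis using \<open>y = n\<close> by simp
    qed (rule Least_le)
  qed
next
  case (Suc a)
  then have IH: "pick (insert n c') a = pick c' a" by simp
  have inS: "pick c' (Suc a) \<in> c'" using pick_in_set_le[of "Suc a" c'] Suc c' by auto
  have gt: "pick c' a < pick c' (Suc a)" using pick_mono_le[of "Suc a" c' a] Suc c' by auto
  have L: "(LEAST b. b \<in> c' \<and> pick c' a < b) = pick c' (Suc a)" by simp
  show ?case unfolding pick.simps(2)[of "insert n c'"] IH
  proof (rule Least_equality)
    show "pick c' (Suc a) \<in> insert n c' \<and> pick c' a < pick c' (Suc a)"
      using inS gt by simp
    fix y assume y: "y \<in> insert n c' \<and> pick c' a < y"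
    show "pick c' (Suc a) \<le> y"
    proof (cases "y = n")
      case True
      then show ?thesis using inS c' by auto
    next
      case False
      then have "y \<in> c' \<and> pick c' a < y" using y by auto
      then have "(LEAST b. b \<in> c' \<and> pick c' a < b) \<le> y" by (rule Least_le)
      then show ?thesis unfolding L .
    qed
  qed
qed

lemma pick_insert_top:
  assumes c': "c' \<subseteq> {..<n}" "card c' = k"
  shows "pick (insert n c') k = n"
proof -
  let ?c = "insert n c'"
  have fin: "finite c'" using c' finite_subset by blast
  have nn: "n \<notin> c'" using c' by auto
  have cc: "card ?c = Suc k" using fin nn c' by simp
  have inn: "pick ?c k \<in> ?c" using pick_in_set_le[of k ?c] cc by simp
  have cp: "card {a\<in>?c. a < pick ?c k} = k" using card_pick_le[of k ?c] cc by simp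
  show ?thesis
  proof (rule ccontr)
    assume ne: "pick ?c k \<noteq> n"
    then have y: "pick ?c k \<in> c'" using inn by simp
    have "{a\<in>?c. a < pick ?c k} \<subseteq> c' - {pick ?c k}" using y c' by auto
    then have "card {a\<in>?c. a < pick ?c k} \<le> card (c' - {pick ?c k})"
      using fin by (intro card_mono) auto
    also have "\<dots> = k - 1" using y fin c' by simp
    finally have "k \<le> k - 1" using cp by simp
    moreover have "k > 0" using y c' fin by (auto simp: card_gt_0_iff)
    ultimately show False by simp
  qed
qed

lemma sgn_insert_top:
  assumes c': "c' \<subseteq> {..<n}" "card c' = k" and kn: "k \<le> n"
  shows "cullis_sgn (insert n c') (Suc k) = ((-1) ^ (n - k) :: 'a :: comm_ring_1) * cullis_sgn c' k"
proof -
  have "(\<Sum>\<alpha><Suc k. pick (insert n c') \<alpha> - \<alpha>) = (\<Sum>\<alpha><k. pick c' \<alpha> - \<alpha>) + (n - k)"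
    using pick_insert_max[OF c'] pick_insert_top[OF c'] by simp
  then show ?thesis unfolding cullis_sgn_def by (simp add: power_add mult.commute)
qed

lemma det_corner:
  assumes M: "M \<in> carrier_mat (Suc k) (Suc k)"
  shows "det (M + t \<cdot>\<^sub>m unitm (Suc k) (Suc k) k k) = det M + t * det (mat_delete M k k)"
proof -
  let ?M = "M + t \<cdot>\<^sub>m unitm (Suc k) (Suc k) k k"
  have M': "?M \<in> carrier_mat (Suc k) (Suc k)" using M by (auto simp: unitm_def)
  have del: "mat_delete ?M i k = mat_delete M i k" for i
    using M unfolding mat_delete_def unitm_def by (intro eq_matI) auto
  have cof: "cofactor ?M i k = cofactor M i k" for i unfolding cofactor_def del ..
  have "det ?M = (\<Sum>i<Suc k. ?M $$ (i,k) * cofactor ?M i k)"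
    by (rule laplace_expansion_column[OF M']) simp
  also have "\<dots> = (\<Sum>i<Suc k. M $$ (i,k) * cofactor M i k + (if i = k then t * cofactor M k k else 0))"
    unfolding cof using M by (intro sum.cong) (auto simp: unitm_def algebra_simps)
  also have "\<dots> = (\<Sum>i<Suc k. M $$ (i,k) * cofactor M i k) + t * cofactor M k k"
    by (simp add: sum.distrib)
  also have "(\<Sum>i<Suc k. M $$ (i,k) * cofactor M i k) = det M"
    by (rule laplace_expansion_column[OF M, symmetric]) simp
  finally show ?thesis unfolding cofactor_def by simp
qed


lemma sub_corner_out:
  fixes X :: "'a :: comm_ring_1 mat"
  assumes X: "X \<in> carrier_mat (Suc n) (Suc k)" and c: "c \<subseteq> {..<Suc n}" "card c = Suc k" and nc: "n \<notin> c"
  shows "submatrix (X + t \<cdot>\<^sub>m unitm (Suc n) (Suc k) n k) c {..<Suc k} = submatrix X c {..<Suc k}"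
proof -
  have X': "X + t \<cdot>\<^sub>m unitm (Suc n) (Suc k) n k \<in> carrier_mat (Suc n) (Suc k)" using X by (auto simp: unitm_def)
  have fin: "finite c" using c finite_subset by blast
  show ?thesis
  proof (rule eq_matI)
    fix a b assume a: "a < dim_row (submatrix X c {..<Suc k})" and b: "b < dim_col (submatrix X c {..<Suc k})"
    then have a': "a < Suc k" and b': "b < Suc k" using sub_carrier[OF X c] by auto
    have pin: "pick c a \<in> c" using pick_in_set_le[of a c] a' c by auto
    then have pn: "pick c a < Suc n" "pick c a \<noteq> n" using c nc by auto
    show "submatrix (X + t \<cdot>\<^sub>m unitm (Suc n) (Suc k) n k) c {..<Suc k} $$ (a, b) = submatrix X c {..<Suc k} $$ (a, b)"
      unfolding sub_index[OF X' c a' b'] sub_index[OF X c a' b'] using pn b' X by (simp add: unitm_def)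
  qed (use sub_carrier[OF X' c] sub_carrier[OF X c] in auto)
qed

lemma sub_corner_in:
  fixes X :: "'a :: comm_ring_1 mat"
  assumes X: "X \<in> carrier_mat (Suc n) (Suc k)" and c: "c \<subseteq> {..<Suc n}" "card c = Suc k" and nc: "n \<in> c"
  shows "submatrix (X + t \<cdot>\<^sub>m unitm (Suc n) (Suc k) n k) c {..<Suc k} = submatrix X c {..<Suc k} + t \<cdot>\<^sub>m unitm (Suc k) (Suc k) k k"
proof -
  have X': "X + t \<cdot>\<^sub>m unitm (Suc n) (Suc k) n k \<in> carrier_mat (Suc n) (Suc k)" using X by (auto simp: unitm_def)
  have fin: "finite c" using c finite_subset by blast
  let ?c' = "c - {n}"
  have c': "?c' \<subseteq> {..<n}" "card ?c' = k" using c nc fin by auto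
  have ceq: "insert n ?c' = c" using nc by auto
  show ?thesis
  proof (rule eq_matI)
    fix a b assume a: "a < dim_row (submatrix X c {..<Suc k} + t \<cdot>\<^sub>m unitm (Suc k) (Suc k) k k)" and b: "b < dim_col (submatrix X c {..<Suc k} + t \<cdot>\<^sub>m unitm (Suc k) (Suc k) k k)"
    then have a': "a < Suc k" and b': "b < Suc k" using sub_carrier[OF X c] by (auto simp: unitm_def)
    have pin: "pick c a \<in> c" using pick_in_set_le[of a c] a' c by auto
    then have pn: "pick c a < Suc n" using c by auto
    have pe: "pick c a = n \<longleftrightarrow> a = k"
    proof (cases "a = k")
      case True
      then show ?thesis using pick_insert_top[OF c'] ceq by simp
    next
      case False
      then have "a < k" using a' by simp
      then have "pick c a = pick ?c' a" using pick_insert_max[OF c'] ceq by metis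
      moreover have "pick ?c' a \<in> ?c'" using pick_in_set_le[of a ?c'] \<open>a < k\<close> c' by auto
      ultimately show ?thesis using False by auto
    qed
    show "submatrix (X + t \<cdot>\<^sub>m unitm (Suc n) (Suc k) n k) c {..<Suc k} $$ (a, b) = (submatrix X c {..<Suc k} + t \<cdot>\<^sub>m unitm (Suc k) (Suc k) k k) $$ (a, b)"
      unfolding sub_index[OF X' c a' b'] using sub_index[OF X c a' b'] pn pe a' b' X sub_carrier[OF X c]
      by (simp add: unitm_def)
  qed (use sub_carrier[OF X' c] sub_carrier[OF X c] in \<open>auto simp: unitm_def\<close>)
qed

lemma delete_sub:
  assumes X: "X \<in> carrier_mat (Suc n) (Suc k)" and c': "c' \<subseteq> {..<n}" "card c' = k"
  shows "mat_delete (submatrix X (insert n c') {..<Suc k}) k k = submatrix (pim n k X) c' {..<k}"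
proof -
  have fin: "finite c'" using c' finite_subset by blast
  have nn: "n \<notin> c'" using c' by auto
  have c: "insert n c' \<subseteq> {..<Suc n}" "card (insert n c') = Suc k" using c' fin nn by auto
  have P: "pim n k X \<in> carrier_mat n k" by (simp add: pim_def)
  show ?thesis
  proof (rule eq_matI)
    fix a b assume a: "a < dim_row (submatrix (pim n k X) c' {..<k})" and b: "b < dim_col (submatrix (pim n k X) c' {..<k})"
    then have a': "a < k" and b': "b < k" using sub_carrier[OF P c'] by auto
    have pin: "pick c' a \<in> c'" using pick_in_set_le[of a c'] a' c' by auto
    then have pn: "pick c' a < n" using c' by auto
    have "mat_delete (submatrix X (insert n c') {..<Suc k}) k k $$ (a, b) = submatrix X (insert n c') {..<Suc k} $$ (a,b)"
      unfolding mat_delete_def using a' b' sub_carrier[OF X c] by simp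
    also have "\<dots> = X $$ (pick c' a, b)" using sub_index[OF X c, of a b] a' b' pick_insert_max[OF c' a'] by simp
    also have "\<dots> = submatrix (pim n k X) c' {..<k} $$ (a, b)"
      unfolding sub_index[OF P c' a' b'] using pn b' by (simp add: pim_def)
    finally show "mat_delete (submatrix X (insert n c') {..<Suc k}) k k $$ (a, b) = submatrix (pim n k X) c' {..<k} $$ (a, b)" .
  qed (use sub_carrier[OF P c'] sub_carrier[OF X c] in auto)
qed


lemma cdet_corner:
  fixes X :: "'a :: comm_ring_1 mat"
  assumes X: "X \<in> carrier_mat (Suc n) (Suc k)" and kn: "k \<le> n"
  shows "cullis_det (Suc n) (Suc k) (X + t \<cdot>\<^sub>m unitm (Suc n) (Suc k) n k)
    = cullis_det (Suc n) (Suc k) X + t * (-1)^(n-k) * cullis_det n k (pim n k X)"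
proof -
  let ?E = "unitm (Suc n) (Suc k) n k"
  let ?X = "X + t \<cdot>\<^sub>m ?E"
  let ?C = "{c. c \<subseteq> {..<Suc n} \<and> card c = Suc k}"
  let ?C' = "{c. c \<subseteq> {..<n} \<and> card c = k}"
  let ?f = "\<lambda>c. cullis_sgn c (Suc k) * det (submatrix X c {..<Suc k})"
  let ?h = "\<lambda>c. cullis_sgn c (Suc k) * det (mat_delete (submatrix X c {..<Suc k}) k k)"
  have finC: "finite ?C" by (rule finite_subset[of _ "Pow {..<Suc n}"]) auto
  have "cullis_det (Suc n) (Suc k) ?X = (\<Sum>c\<in>?C. ?f c + (if n \<in> c then t * ?h c else 0))"
    unfolding cullis_det_def
  proof (intro sum.cong refl)
    fix c assume "c \<in> ?C"
    then have c: "c \<subseteq> {..<Suc n}" "card c = Suc k" by auto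
    show "cullis_sgn c (Suc k) * det (submatrix ?X c {..<Suc k}) = ?f c + (if n \<in> c then t * ?h c else 0)"
    proof (cases "n \<in> c")
      case True
      show ?thesis unfolding sub_corner_in[OF X c True] det_corner[OF sub_carrier[OF X c]]
        using True by (simp add: algebra_simps)
    next
      case False
      show ?thesis unfolding sub_corner_out[OF X c False] using False by simp
    qed
  qed
  also have "\<dots> = cullis_det (Suc n) (Suc k) X + t * (\<Sum>c\<in>{c\<in>?C. n \<in> c}. ?h c)"
  proof -
    have "(\<Sum>c\<in>?C. if n \<in> c then t * ?h c else 0) = (\<Sum>c\<in>{c\<in>?C. n \<in> c}. t * ?h c)"
      by (rule sum.inter_filter[symmetric, OF finC])
    then show ?thesis unfolding sum.distrib cullis_det_def by (simp add: sum_distrib_left)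
  qed
  also have "(\<Sum>c\<in>{c\<in>?C. n \<in> c}. ?h c) = (\<Sum>c'\<in>?C'. ?h (insert n c'))"
  proof (rule sum.reindex_bij_betw[symmetric], unfold bij_betw_def, intro conjI)
    show "inj_on (insert n) ?C'"
    proof (rule inj_onI)
      fix x y assume "x \<in> ?C'" "y \<in> ?C'" "insert n x = insert n y"
      then show "x = y" by (metis insert_ident lessThan_iff less_irrefl mem_Collect_eq subset_iff)
    qed
    show "insert n ` ?C' = {c\<in>?C. n \<in> c}"
    proof
      show "insert n ` ?C' \<subseteq> {c\<in>?C. n \<in> c}"
      proof
        fix c assume "c \<in> insert n ` ?C'"
        then obtain c' where c': "c' \<subseteq> {..<n}" "card c' = k" "c = insert n c'" by auto
        have "finite c'" using c' finite_subset by blast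
        moreover have "n \<notin> c'" using c' by auto
        ultimately show "c \<in> {c\<in>?C. n \<in> c}" using c' by auto
      qed
      show "{c\<in>?C. n \<in> c} \<subseteq> insert n ` ?C'"
      proof
        fix c assume c: "c \<in> {c\<in>?C. n \<in> c}"
        then have "finite c" using finite_subset by blast
        then have "c - {n} \<in> ?C'" using c by auto
        moreover have "c = insert n (c - {n})" using c by auto
        ultimately show "c \<in> insert n ` ?C'" by blast
      qed
    qed
  qed
  also have "(\<Sum>c'\<in>?C'. ?h (insert n c')) = (-1)^(n-k) * cullis_det n k (pim n k X)"
    unfolding cullis_det_def sum_distrib_left
  proof (intro sum.cong refl)
    fix c' assume "c' \<in> ?C'"
    then have c': "c' \<subseteq> {..<n}" "card c' = k" by auto
    show "?h (insert n c') = (-1)^(n-k) * (cullis_sgn c' k * det (submatrix (pim n k X) c' {..<k}))"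
      unfolding delete_sub[OF X c'] sgn_insert_top[OF c' kn] by simp
  qed
  finally show ?thesis by (simp add: algebra_simps)
qed


lemma sub_mult:
  fixes X :: "'a :: comm_ring_1 mat"
  assumes X: "X \<in> carrier_mat n k" and P: "P \<in> carrier_mat k k" and c: "c \<subseteq> {..<n}" "card c = k"
  shows "submatrix (X * P) c {..<k} = submatrix X c {..<k} * P"
proof -
  have XP: "X * P \<in> carrier_mat n k" using X P by simp
  show ?thesis
  proof (rule eq_matI)
    fix a b assume a: "a < dim_row (submatrix X c {..<k} * P)" and b: "b < dim_col (submatrix X c {..<k} * P)"
    then have a': "a < k" and b': "b < k" using sub_carrier[OF X c] P by auto
    have pin: "pick c a \<in> c" using pick_in_set_le[of a c] a' c by auto
    then have pn: "pick c a < n" using c by auto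
    have "submatrix (X * P) c {..<k} $$ (a,b) = (X * P) $$ (pick c a, b)" by (rule sub_index[OF XP c a' b'])
    also have "\<dots> = (\<Sum>m<k. X $$ (pick c a, m) * P $$ (m, b))"
      using X P pn b' by (simp add: scalar_prod_def atLeast0LessThan)
    also have "\<dots> = (\<Sum>m<k. submatrix X c {..<k} $$ (a, m) * P $$ (m, b))"
      using sub_index[OF X c a'] by simp
    also have "\<dots> = (submatrix X c {..<k} * P) $$ (a, b)"
      using sub_carrier[OF X c] P a' b' by (simp add: scalar_prod_def atLeast0LessThan)
    finally show "submatrix (X * P) c {..<k} $$ (a, b) = (submatrix X c {..<k} * P) $$ (a, b)" .
  qed (use sub_carrier[OF X c] sub_carrier[OF XP c] P in auto)
qed

lemma cdet_mult:
  fixes X :: "'a :: comm_ring_1 mat"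
  assumes X: "X \<in> carrier_mat n k" and P: "P \<in> carrier_mat k k"
  shows "cullis_det n k (X * P) = cullis_det n k X * det P"
  unfolding cullis_det_def sum_distrib_right
proof (intro sum.cong refl)
  fix c assume "c \<in> {c. c \<subseteq> {..<n} \<and> card c = k}"
  then have c: "c \<subseteq> {..<n}" "card c = k" by auto
  show "cullis_sgn c k * det (submatrix (X * P) c {..<k}) = cullis_sgn c k * det (submatrix X c {..<k}) * det P"
    unfolding sub_mult[OF X P c] det_mult[OF sub_carrier[OF X c] P] by simp
qed

definition lc :: "nat \<Rightarrow> nat \<Rightarrow> nat \<Rightarrow> (nat \<Rightarrow> 'a :: comm_ring_1 mat) \<Rightarrow> (nat \<Rightarrow> 'a) \<Rightarrow> 'a mat" where
  "lc n k c g a = mat n k (\<lambda>(i,j). \<Sum>l<c. a l * g l $$ (i,j))"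

definition closedV :: "nat \<Rightarrow> nat \<Rightarrow> 'a :: comm_ring_1 mat set \<Rightarrow> bool" where
  "closedV n k V \<longleftrightarrow> V \<subseteq> carrier_mat n k \<and> 0\<^sub>m n k \<in> V \<and> (\<forall>x\<in>V. \<forall>y\<in>V. x + y \<in> V)
     \<and> (\<forall>a. \<forall>x\<in>V. a \<cdot>\<^sub>m x \<in> V)"

definition SC :: "nat \<Rightarrow> nat \<Rightarrow> 'a :: comm_ring_1 mat set \<Rightarrow> nat \<Rightarrow> (nat \<Rightarrow> 'a mat) \<Rightarrow> bool" where
  "SC n k V c g \<longleftrightarrow> (\<forall>Y\<in>carrier_mat n k. \<exists>v\<in>V. \<exists>a. Y = v + lc n k c g a)"

fun msum :: "nat \<Rightarrow> nat \<Rightarrow> (nat \<Rightarrow> 'a :: comm_ring_1 mat) \<Rightarrow> nat \<Rightarrow> 'a mat" where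
  "msum n k f 0 = 0\<^sub>m n k"
| "msum n k f (Suc m) = msum n k f m + f m"

lemma lc_carrier[simp]: "lc n k c g a \<in> carrier_mat n k" by (simp add: lc_def)
lemma lc_index[simp]: "i < n \<Longrightarrow> j < k \<Longrightarrow> lc n k c g a $$ (i,j) = (\<Sum>l<c. a l * g l $$ (i,j))"
  by (simp add: lc_def)

lemma msum_carrier: "(\<And>l. l < m \<Longrightarrow> f l \<in> carrier_mat n k) \<Longrightarrow> msum n k f m \<in> carrier_mat n k"
  by (induction m) auto

lemma msum_index: "(\<And>l. l < m \<Longrightarrow> f l \<in> carrier_mat n k) \<Longrightarrow> i < n \<Longrightarrow> j < k \<Longrightarrow>
  msum n k f m $$ (i,j) = (\<Sum>l<m. f l $$ (i,j))"
proof (induction m)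
  case (Suc m)
  have fm: "f m \<in> carrier_mat n k" using Suc.prems by simp
  have ms: "msum n k f m \<in> carrier_mat n k" using Suc.prems msum_carrier[of m f n k] by simp
  have d: "dim_row (f m) = n" "dim_col (f m) = k" using fm by auto
  have IH: "msum n k f m $$ (i,j) = (\<Sum>l<m. f l $$ (i,j))" using Suc by simp
  show ?case using Suc.prems d IH by simp
qed simp

lemma msum_closed: "closedV n k V \<Longrightarrow> (\<And>l. l < m \<Longrightarrow> f l \<in> V) \<Longrightarrow> msum n k f m \<in> V"
  by (induction m) (auto simp: closedV_def)

lemma closedV_sub: "closedV n k V \<Longrightarrow> x \<in> V \<Longrightarrow> x \<in> carrier_mat n k"
  by (auto simp: closedV_def)

lemma kernel_exists:
  fixes Cf :: "nat \<Rightarrow> nat \<Rightarrow> 'a :: field"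
  assumes ck: "c < k"
  shows "\<exists>w. (\<exists>m<k. w m \<noteq> 0) \<and> (\<forall>l<c. (\<Sum>m<k. Cf l m * w m) = 0)"
proof -
  let ?A = "mat k k (\<lambda>(l,m). if l < c then Cf l m else 0)"
  have A: "?A \<in> carrier_mat k k" by simp
  have "det ?A = (\<Sum>j<k. ?A $$ (k - 1,j) * cofactor ?A (k - 1) j)"
    by (rule laplace_expansion_row[OF A]) (use ck in simp)
  also have "\<dots> = 0"
  proof -
    have "\<not> (k - 1 < c)" using ck by linarith
    then show ?thesis using ck by (intro sum.neutral) simp
  qed
  finally have "det ?A = 0" .
  then obtain v where v: "v \<in> carrier_vec k" "v \<noteq> 0\<^sub>v k" "?A *\<^sub>v v = 0\<^sub>v k"
    using det_0_iff_vec_prod_zero_field[OF A] by blast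
  have nz: "\<exists>m<k. v $ m \<noteq> 0"
  proof (rule ccontr)
    assume "\<not> (\<exists>m<k. v $ m \<noteq> 0)"
    then have "v = 0\<^sub>v k" using v(1) by (intro eq_vecI) auto
    then show False using v(2) by simp
  qed
  have "\<forall>l<c. (\<Sum>m<k. Cf l m * v $ m) = 0"
  proof (intro allI impI)
    fix l assume l: "l < c"
    have "(?A *\<^sub>v v) $ l = 0" using v(3) l ck by simp
    then show "(\<Sum>m<k. Cf l m * v $ m) = 0"
      using l ck v(1) by (simp add: scalar_prod_def atLeast0LessThan)
  qed
  with nz show ?thesis by (intro exI[of _ "\<lambda>m. v $ m"]) auto
qed


definition rowm :: "nat \<Rightarrow> nat \<Rightarrow> nat \<Rightarrow> (nat \<Rightarrow> 'a :: comm_ring_1) \<Rightarrow> 'a mat" where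
  "rowm n k i w = mat n k (\<lambda>(r,j). if r = i then w j else 0)"

lemma lc_dims[simp]: "dim_row (lc n k c g a) = n" "dim_col (lc n k c g a) = k" by (simp_all add: lc_def)
lemma unitm_dims[simp]: "dim_row (unitm n k i j) = n" "dim_col (unitm n k i j) = k" by (simp_all add: unitm_def)
lemma rowm_dims[simp]: "dim_row (rowm n k i w) = n" "dim_col (rowm n k i w) = k" by (simp_all add: rowm_def)

lemma unitm_carrier[simp]: "unitm n k i j \<in> carrier_mat n k" by (simp add: unitm_def)
lemma rowm_carrier[simp]: "rowm n k i w \<in> carrier_mat n k" by (simp add: rowm_def)

lemma sum_swap_lc:
  fixes w :: "nat \<Rightarrow> 'a :: comm_ring_1"
  shows "(\<Sum>m<k. w m * (\<Sum>l<c. af m l * G l)) = (\<Sum>l<c. (\<Sum>m<k. af m l * w m) * G l)"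
  by (simp add: sum_distrib_left sum_distrib_right sum.swap[of _ "{..<k}"] ac_simps)

lemma row_dir:
  fixes V :: "'a :: field mat set"
  assumes cl: "closedV n k V" and sc: "SC n k V c g" and ck: "c < k" and i: "i < n"
  shows "\<exists>w. (\<exists>m<k. w m \<noteq> 0) \<and> rowm n k i w \<in> V"
proof -
  have "\<forall>m. \<exists>p. m < k \<longrightarrow> (fst p \<in> V \<and> unitm n k i m = fst p + lc n k c g (snd p))"
  proof
    fix m
    show "\<exists>p. m < k \<longrightarrow> (fst p \<in> V \<and> unitm n k i m = fst p + lc n k c g (snd p))"
      using sc unitm_carrier[of n k i m] unfolding SC_def by fastforce
  qed
  then obtain F where F: "\<And>m. m < k \<Longrightarrow> fst (F m) \<in> V \<and> unitm n k i m = fst (F m) + lc n k c g (snd (F m))"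
    using choice[of "\<lambda>m p. m < k \<longrightarrow> (fst p \<in> V \<and> unitm n k i m = fst p + lc n k c g (snd p))"] by blast
  define vf where "vf m = fst (F m)" for m
  define af where "af m = snd (F m)" for m
  have vfV: "m < k \<Longrightarrow> vf m \<in> V" for m using F vf_def by simp
  have vfC: "m < k \<Longrightarrow> vf m \<in> carrier_mat n k" for m using vfV cl closedV_sub by blast
  have vfe: "vf m $$ (r,j) = (if r = i \<and> j = m then 1 else 0) - (\<Sum>l<c. af m l * g l $$ (r,j))"
    if m: "m < k" and r: "r < n" and j: "j < k" for m r j
  proof -
    have "unitm n k i m $$ (r,j) = (vf m + lc n k c g (af m)) $$ (r,j)" using F[OF m] vf_def af_def by simp
    also have "\<dots> = vf m $$ (r,j) + (\<Sum>l<c. af m l * g l $$ (r,j))" using r j by simp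
    finally show ?thesis using r j by (simp add: unitm_def algebra_simps)
  qed
  obtain w where w: "\<exists>m<k. w m \<noteq> 0" "\<forall>l<c. (\<Sum>m<k. af m l * w m) = 0"
    using kernel_exists[OF ck, of "\<lambda>l m. af m l"] by blast
  let ?W = "msum n k (\<lambda>m. w m \<cdot>\<^sub>m vf m) k"
  have WV: "?W \<in> V" using cl vfV by (intro msum_closed) (auto simp: closedV_def)
  have "rowm n k i w = ?W"
  proof (rule eq_matI)
    have WC: "?W \<in> carrier_mat n k" using cl WV closedV_sub by blast
    fix r j assume r: "r < dim_row ?W" and j: "j < dim_col ?W"
    then have r': "r < n" and j': "j < k" using WC by auto
    have "?W $$ (r,j) = (\<Sum>m<k. (w m \<cdot>\<^sub>m vf m) $$ (r,j))"
      by (rule msum_index) (use vfC r' j' in auto)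
    also have "\<dots> = (\<Sum>m<k. w m * ((if r = i \<and> j = m then 1 else 0) - (\<Sum>l<c. af m l * g l $$ (r,j))))"
    proof (intro sum.cong refl)
      fix m assume "m \<in> {..<k}"
      then have m: "m < k" by simp
      have d: "dim_row (vf m) = n" "dim_col (vf m) = k" using vfC[OF m] by auto
      show "(w m \<cdot>\<^sub>m vf m) $$ (r,j) = w m * ((if r = i \<and> j = m then 1 else 0) - (\<Sum>l<c. af m l * g l $$ (r,j)))"
        using d r' j' vfe[OF m r' j'] by simp
    qed
    also have "\<dots> = (\<Sum>m<k. w m * (if r = i \<and> j = m then 1 else 0)) - (\<Sum>m<k. w m * (\<Sum>l<c. af m l * g l $$ (r,j)))"
      by (simp add: right_diff_distrib sum_subtractf)
    also have "(\<Sum>m<k. w m * (\<Sum>l<c. af m l * g l $$ (r,j))) = (\<Sum>l<c. (\<Sum>m<k. af m l * w m) * g l $$ (r,j))"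
      by (rule sum_swap_lc)
    also have "\<dots> = 0" using w(2) by simp
    also have "(\<Sum>m<k. w m * (if r = i \<and> j = m then 1 else 0)) = (if r = i then w j else 0)"
      using j' by (cases "r = i") (auto simp: if_distrib cong: if_cong)
    finally show "rowm n k i w $$ (r,j) = ?W $$ (r,j)" using r' j' by (simp add: rowm_def)
  qed (use closedV_sub[OF cl WV] in auto)
  with WV w(1) show ?thesis by auto
qed


definition tg :: "nat \<Rightarrow> nat \<Rightarrow> 'a :: comm_ring_1 mat \<Rightarrow> (nat \<Rightarrow> 'a mat) \<Rightarrow> nat \<Rightarrow> 'a mat" where
  "tg n k P g = (\<lambda>l. mat n k (\<lambda>(i,j). \<Sum>m<k. g l $$ (i,m) * P $$ (m,j)))"

lemma lc_mult:
  assumes P: "P \<in> carrier_mat k k"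
  shows "lc n k c g a * P = lc n k c (tg n k P g) a"
proof (rule eq_matI)
  fix i j assume i: "i < dim_row (lc n k c (tg n k P g) a)" and j: "j < dim_col (lc n k c (tg n k P g) a)"
  then have i': "i < n" and j': "j < k" by auto
  have "(lc n k c g a * P) $$ (i,j) = (\<Sum>m<k. lc n k c g a $$ (i,m) * P $$ (m,j))"
    using P i' j' by (simp add: scalar_prod_def atLeast0LessThan)
  also have "\<dots> = (\<Sum>m<k. (\<Sum>l<c. a l * g l $$ (i,m)) * P $$ (m,j))"
    using i' by (intro sum.cong) auto
  also have "\<dots> = (\<Sum>l<c. a l * (\<Sum>m<k. g l $$ (i,m) * P $$ (m,j)))"
    by (simp add: sum_distrib_left sum_distrib_right sum.swap[of _ "{..<k}"] ac_simps)
  also have "\<dots> = lc n k c (tg n k P g) a $$ (i,j)" using i' j' by (simp add: tg_def)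
  finally show "(lc n k c g a * P) $$ (i,j) = lc n k c (tg n k P g) a $$ (i,j)" .
qed (use P in auto)

lemma transform_closed:
  fixes V :: "'a :: field mat set"
  assumes cl: "closedV n k V" and P: "P \<in> carrier_mat k k"
  shows "closedV n k ((\<lambda>X. X * P) ` V)"
proof -
  have VC: "x \<in> V \<Longrightarrow> x \<in> carrier_mat n k" for x using cl closedV_sub by blast
  have "0\<^sub>m n k * P = 0\<^sub>m n k" using P by auto
  then have z: "0\<^sub>m n k \<in> (\<lambda>X. X * P) ` V" using cl unfolding closedV_def by (metis image_eqI)
  have add: "x * P + y * P \<in> (\<lambda>X. X * P) ` V" if "x \<in> V" "y \<in> V" for x y
  proof -
    have "x * P + y * P = (x + y) * P" using VC[OF that(1)] VC[OF that(2)] P by (simp add: add_mult_distrib_mat)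
    moreover have "x + y \<in> V" using cl that unfolding closedV_def by blast
    ultimately show ?thesis by blast
  qed
  have sm: "a \<cdot>\<^sub>m (x * P) \<in> (\<lambda>X. X * P) ` V" if "x \<in> V" for x a
  proof -
    have "a \<cdot>\<^sub>m (x * P) = (a \<cdot>\<^sub>m x) * P" using VC[OF that] P by (simp add: mult_smult_assoc_mat)
    moreover have "a \<cdot>\<^sub>m x \<in> V" using cl that unfolding closedV_def by blast
    ultimately show ?thesis by blast
  qed
  have mc: "x * P \<in> carrier_mat n k" if "x \<in> V" for x using VC[OF that] P by simp
  show ?thesis unfolding closedV_def using z add sm mc by auto
qed

lemma transform_mem:
  fixes V :: "'a :: field mat set"
  assumes cl: "closedV n k V" and B: "B \<in> carrier_mat k k" and P: "P \<in> carrier_mat k k"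
    and BP: "B * P = 1\<^sub>m k" and PB: "P * B = 1\<^sub>m k" and X: "X \<in> carrier_mat n k"
  shows "X \<in> (\<lambda>X. X * P) ` V \<longleftrightarrow> X * B \<in> V"
proof
  assume "X \<in> (\<lambda>X. X * P) ` V"
  then obtain x where x: "x \<in> V" "X = x * P" by auto
  have xc: "x \<in> carrier_mat n k" using cl x closedV_sub by blast
  have "X * B = x * (P * B)" using x xc P B by simp
  also have "\<dots> = x" using PB xc by simp
  finally show "X * B \<in> V" using x by simp
next
  assume "X * B \<in> V"
  moreover have "X * B * P = X" using X B P BP by simp
  ultimately show "X \<in> (\<lambda>X. X * P) ` V" by (metis image_eqI)
qed

lemma transform_SC:
  fixes V :: "'a :: field mat set"
  assumes cl: "closedV n k V" and sc: "SC n k V c g" and B: "B \<in> carrier_mat k k" and P: "P \<in> carrier_mat k k"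
    and BP: "B * P = 1\<^sub>m k"
  shows "SC n k ((\<lambda>X. X * P) ` V) c (tg n k P g)"
  unfolding SC_def
proof
  fix Y :: "'a mat" assume Y: "Y \<in> carrier_mat n k"
  then have "Y * B \<in> carrier_mat n k" using B by simp
  then obtain v a where v: "v \<in> V" "Y * B = v + lc n k c g a" using sc unfolding SC_def by blast
  have vc: "v \<in> carrier_mat n k" using cl v closedV_sub by blast
  have "Y = Y * B * P" using Y B P BP by simp
  also have "\<dots> = v * P + lc n k c g a * P" unfolding v(2) using vc P by (simp add: add_mult_distrib_mat)
  also have "\<dots> = v * P + lc n k c (tg n k P g) a" using lc_mult[OF P] by simp
  finally show "\<exists>v'\<in>(\<lambda>X. X * P) ` V. \<exists>a. Y = v' + lc n k c (tg n k P g) a" using v(1) by blast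
qed

lemma transform_back:
  fixes V :: "'a :: field mat set"
  assumes cl: "closedV n k V" and s: "s \<in> carrier_mat n k" and P: "P \<in> carrier_mat k k"
    and ex: "\<exists>v\<in>(\<lambda>X. X * P) ` V. cullis_det n k (s * P + v) \<noteq> 0"
  shows "\<exists>v\<in>V. cullis_det n k (s + v) \<noteq> 0"
proof -
  from ex obtain v where v: "v \<in> V" "cullis_det n k (s * P + v * P) \<noteq> 0" by auto
  have vc: "v \<in> carrier_mat n k" using cl v closedV_sub by blast
  have "s * P + v * P = (s + v) * P" using s vc P by (simp add: add_mult_distrib_mat)
  then have "cullis_det n k (s + v) * det P \<noteq> 0" using v(2) cdet_mult[of "s + v" n k P] s vc P by simp
  then show ?thesis using v(1) by auto
qed

lemma unitm_mult:
  assumes B: "B \<in> carrier_mat k k" and j: "j < k"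
  shows "unitm n k r j * B = rowm n k r (\<lambda>b. B $$ (j, b))"
proof (rule eq_matI)
  fix a b assume a: "a < dim_row (rowm n k r (\<lambda>b. B $$ (j, b)))" and b: "b < dim_col (rowm n k r (\<lambda>b. B $$ (j, b)))"
  then have a': "a < n" and b': "b < k" by auto
  have "(unitm n k r j * B) $$ (a,b) = (\<Sum>m<k. unitm n k r j $$ (a,m) * B $$ (m,b))"
    using B a' b' by (simp add: scalar_prod_def atLeast0LessThan)
  also have "\<dots> = (\<Sum>m<k. if m = j then (if a = r then B $$ (j,b) else 0) else 0)"
    using a' by (intro sum.cong) (auto simp: unitm_def)
  also have "\<dots> = (if a = r then B $$ (j,b) else 0)" using j by simp
  finally show "(unitm n k r j * B) $$ (a,b) = rowm n k r (\<lambda>b. B $$ (j, b)) $$ (a,b)"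
    using a' b' by (simp add: rowm_def)
qed (use B in auto)

lemma mkB:
  fixes w :: "nat \<Rightarrow> 'a :: field"
  assumes m0: "m0 < Suc k" and w0: "w m0 \<noteq> 0"
  shows "\<exists>B P. B \<in> carrier_mat (Suc k) (Suc k) \<and> P \<in> carrier_mat (Suc k) (Suc k) \<and> B * P = 1\<^sub>m (Suc k)
     \<and> P * B = 1\<^sub>m (Suc k) \<and> (\<forall>b<Suc k. B $$ (k, b) = w b)"
proof -
  define B :: "'a mat" where "B = mat (Suc k) (Suc k) (\<lambda>(r,c). if r = k then w c else if r = m0 then (if c = k then 1 else 0)
     else (if c = r then 1 else 0))"
  have Bc: "B \<in> carrier_mat (Suc k) (Suc k)" unfolding B_def by simp
  have "det B \<noteq> 0"
  proof
    assume "det B = 0"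
    then obtain v where v: "v \<in> carrier_vec (Suc k)" "v \<noteq> 0\<^sub>v (Suc k)" "B *\<^sub>v v = 0\<^sub>v (Suc k)"
      using det_0_iff_vec_prod_zero_field[OF Bc] by blast
    have eq: "(\<Sum>c<Suc k. B $$ (r,c) * v $ c) = 0" if r: "r < Suc k" for r
    proof -
      have "(B *\<^sub>v v) $ r = 0" using v(3) r by simp
      then show ?thesis using r v(1) Bc by (simp add: scalar_prod_def atLeast0LessThan)
    qed
    have z1: "v $ r = 0" if r: "r < Suc k" "r \<noteq> k" "r \<noteq> m0" for r
    proof -
      have "(\<Sum>c<Suc k. B $$ (r,c) * v $ c) = (\<Sum>c<Suc k. if c = r then v $ c else 0)"
        using r by (intro sum.cong) (auto simp: B_def)
      then show ?thesis using eq[OF r(1)] r by simp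
    qed
    have z2: "v $ k = 0" if "m0 \<noteq> k"
    proof -
      have "(\<Sum>c<Suc k. B $$ (m0,c) * v $ c) = (\<Sum>c<Suc k. if c = k then v $ c else 0)"
        using m0 that by (intro sum.cong) (auto simp: B_def)
      then show ?thesis using eq[OF m0] by simp
    qed
    have zo: "v $ c = 0" if "c < Suc k" "c \<noteq> m0" for c
      using z1 z2 that by (cases "c = k") auto
    have "(\<Sum>c<Suc k. B $$ (k,c) * v $ c) = (\<Sum>c\<in>{..<Suc k}. if c = m0 then w m0 * v $ m0 else 0)"
      using zo by (intro sum.cong) (auto simp: B_def)
    also have "\<dots> = w m0 * v $ m0" by (simp only: sum.delta finite_lessThan) (simp add: m0)
    finally have "w m0 * v $ m0 = 0" using eq[of k] by simp
    then have "v $ m0 = 0" using w0 by simp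
    then have "v = 0\<^sub>v (Suc k)" using zo v(1) by (intro eq_vecI) auto
    then show False using v(2) by simp
  qed
  from det_non_zero_imp_unit[OF Bc this, unfolded Units_def, of "()"]
  obtain P where P: "P \<in> carrier_mat (Suc k) (Suc k)" and PB: "P * B = 1\<^sub>m (Suc k)" and BP: "B * P = 1\<^sub>m (Suc k)"
    by (auto simp: ring_mat_def)
  have "\<forall>b<Suc k. B $$ (k, b) = w b" by (simp add: B_def)
  then show ?thesis using Bc P PB BP by blast
qed


definition emb :: "nat \<Rightarrow> nat \<Rightarrow> 'a :: comm_ring_1 mat \<Rightarrow> 'a mat" where
  "emb n k Y = mat (Suc n) (Suc k) (\<lambda>(i,j). if i < n \<and> j < k then Y $$ (i,j) else 0)"

lemma pim_carrier[simp]: "pim n k X \<in> carrier_mat n k" by (simp add: pim_def)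
lemma pim_dims[simp]: "dim_row (pim n k X) = n" "dim_col (pim n k X) = k" by (simp_all add: pim_def)
lemma pim_index[simp]: "i < n \<Longrightarrow> j < k \<Longrightarrow> pim n k X $$ (i,j) = X $$ (i,j)" by (simp add: pim_def)

lemma pim_add: "X \<in> carrier_mat (Suc n) (Suc k) \<Longrightarrow> Y \<in> carrier_mat (Suc n) (Suc k) \<Longrightarrow>
  pim n k (X + Y) = pim n k X + pim n k Y"
  by (intro eq_matI) auto

lemma pim_smult: "X \<in> carrier_mat (Suc n) (Suc k) \<Longrightarrow> pim n k (a \<cdot>\<^sub>m X) = a \<cdot>\<^sub>m pim n k X"
  by (intro eq_matI) auto

lemma pim_zero: "pim n k (0\<^sub>m (Suc n) (Suc k)) = 0\<^sub>m n k"
  by (intro eq_matI) auto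

lemma pim_lc: "pim n k (lc (Suc n) (Suc k) c g a) = lc n k c (\<lambda>l. pim n k (g l)) a"
  by (intro eq_matI) auto

lemma pim_emb: "Y \<in> carrier_mat n k \<Longrightarrow> pim n k (emb n k Y) = Y"
  by (intro eq_matI) (auto simp: emb_def)

lemma emb_carrier[simp]: "emb n k Y \<in> carrier_mat (Suc n) (Suc k)" by (simp add: emb_def)

lemma pim_closed:
  fixes V :: "'a :: field mat set"
  assumes cl: "closedV (Suc n) (Suc k) V"
  shows "closedV n k (pim n k ` V)"
proof -
  have VC: "x \<in> V \<Longrightarrow> x \<in> carrier_mat (Suc n) (Suc k)" for x using cl closedV_sub by blast
  have z: "0\<^sub>m n k \<in> pim n k ` V" using cl pim_zero[of n k] unfolding closedV_def by (metis image_eqI)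
  have add: "pim n k x + pim n k y \<in> pim n k ` V" if "x \<in> V" "y \<in> V" for x y
  proof -
    have "pim n k x + pim n k y = pim n k (x + y)" using VC that pim_add by metis
    moreover have "x + y \<in> V" using cl that unfolding closedV_def by blast
    ultimately show ?thesis by blast
  qed
  have sm: "a \<cdot>\<^sub>m pim n k x \<in> pim n k ` V" if "x \<in> V" for x a
  proof -
    have "a \<cdot>\<^sub>m pim n k x = pim n k (a \<cdot>\<^sub>m x)" using VC that pim_smult by metis
    moreover have "a \<cdot>\<^sub>m x \<in> V" using cl that unfolding closedV_def by blast
    ultimately show ?thesis by blast
  qed
  show ?thesis unfolding closedV_def using z add sm by auto
qed

lemma projA:
  fixes V :: "'a :: field mat set"
  assumes cl: "closedV (Suc n) (Suc k) V" and sc: "SC (Suc n) (Suc k) V c g"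
  shows "SC n k (pim n k ` V) c (\<lambda>l. pim n k (g l))"
  unfolding SC_def
proof
  fix Y :: "'a mat" assume Y: "Y \<in> carrier_mat n k"
  obtain v a where v: "v \<in> V" "emb n k Y = v + lc (Suc n) (Suc k) c g a"
    using sc emb_carrier[of n k Y] unfolding SC_def by blast
  have vc: "v \<in> carrier_mat (Suc n) (Suc k)" using cl v closedV_sub by blast
  have "Y = pim n k (emb n k Y)" using pim_emb[OF Y] by simp
  also have "\<dots> = pim n k v + lc n k c (\<lambda>l. pim n k (g l)) a"
    unfolding v(2) using pim_add[OF vc lc_carrier] pim_lc by metis
  finally show "\<exists>v\<in>pim n k ` V. \<exists>a. Y = v + lc n k c (\<lambda>l. pim n k (g l)) a" using v(1) by blast
qed

lemma projB:
  fixes V :: "'a :: field mat set"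
  assumes cl: "closedV (Suc n) (Suc k) V" and sc: "SC (Suc n) (Suc k) V c g"
    and ij: "i < Suc n" "j < Suc k" "i = n \<or> j = k" and nV: "unitm (Suc n) (Suc k) i j \<notin> V"
  shows "0 < c \<and> (\<exists>g'. SC n k (pim n k ` V) (c - 1) g')"
proof -
  let ?E = "unitm (Suc n) (Suc k) i j"
  have VC: "x \<in> V \<Longrightarrow> x \<in> carrier_mat (Suc n) (Suc k)" for x using cl closedV_sub by blast
  obtain v0 a0 where v0: "v0 \<in> V" "?E = v0 + lc (Suc n) (Suc k) c g a0"
    using sc unitm_carrier unfolding SC_def by blast
  have "\<exists>l0<c. a0 l0 \<noteq> 0"
  proof (rule ccontr)
    assume "\<not> (\<exists>l0<c. a0 l0 \<noteq> 0)"
    then have "lc (Suc n) (Suc k) c g a0 = 0\<^sub>m (Suc n) (Suc k)" by (intro eq_matI) auto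
    then have "?E = v0" using v0 VC by simp
    then show False using v0 nV by simp
  qed
  then obtain l0 where l0: "l0 < c" "a0 l0 \<noteq> 0" by blast
  define \<sigma> where "\<sigma> l = (if l = l0 then c - 1 else if l = c - 1 then l0 else l)" for l
  have bij: "bij_betw \<sigma> {..<c} {..<c}"
    by (rule bij_betwI[where g = \<sigma>]) (use l0 in \<open>auto simp: \<sigma>_def\<close>)
  have reidx: "(\<Sum>l<c. f (\<sigma> l)) = (\<Sum>l<c. f l)" for f :: "nat \<Rightarrow> 'a"
    using sum.reindex_bij_betw[OF bij, of f] by simp
  have cS: "c = Suc (c - 1)" using l0 by simp
  have last: "\<sigma> (c - 1) = l0" by (simp add: \<sigma>_def)
  define g' where "g' l = pim n k (g (\<sigma> l))" for l
  have "SC n k (pim n k ` V) (c - 1) g'"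
    unfolding SC_def
  proof
    fix Y :: "'a mat" assume Y: "Y \<in> carrier_mat n k"
    obtain v a where v: "v \<in> V" "emb n k Y = v + lc (Suc n) (Suc k) c g a"
      using sc emb_carrier[of n k Y] unfolding SC_def by blast
    define \<tau> where "\<tau> = a l0 / a0 l0"
    define b where "b l = a l - \<tau> * a0 l" for l
    have bl0: "b l0 = 0" using l0 by (simp add: b_def \<tau>_def)
    define v1 where "v1 = v + (- \<tau>) \<cdot>\<^sub>m v0"
    have v1V: "v1 \<in> V" using cl v(1) v0(1) unfolding v1_def closedV_def by blast
    have vc: "v \<in> carrier_mat (Suc n) (Suc k)" "v0 \<in> carrier_mat (Suc n) (Suc k)" using VC v(1) v0(1) by auto
    have "Y = pim n k v1 + lc n k (c - 1) g' (\<lambda>l. b (\<sigma> l))"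
    proof (rule eq_matI)
      fix p q assume p: "p < dim_row (pim n k v1 + lc n k (c - 1) g' (\<lambda>l. b (\<sigma> l)))"
        and q: "q < dim_col (pim n k v1 + lc n k (c - 1) g' (\<lambda>l. b (\<sigma> l)))"
      then have p': "p < n" and q': "q < k" by auto
      have e1: "Y $$ (p,q) = v $$ (p,q) + (\<Sum>l<c. a l * g l $$ (p,q))"
      proof -
        have "Y $$ (p,q) = emb n k Y $$ (p,q)" using p' q' by (simp add: emb_def)
        also have "\<dots> = v $$ (p,q) + (\<Sum>l<c. a l * g l $$ (p,q))" unfolding v(2) using vc p' q' by simp
        finally show ?thesis .
      qed
      have e2: "0 = v0 $$ (p,q) + (\<Sum>l<c. a0 l * g l $$ (p,q))"
      proof -
        have "?E $$ (p,q) = 0" using p' q' ij by (auto simp: unitm_def)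
        moreover have "?E $$ (p,q) = v0 $$ (p,q) + (\<Sum>l<c. a0 l * g l $$ (p,q))"
          unfolding v0(2) using vc p' q' by simp
        ultimately show ?thesis by metis
      qed
      have "(\<Sum>l<c - 1. b (\<sigma> l) * g' l $$ (p,q)) = (\<Sum>l<c - 1. b (\<sigma> l) * g (\<sigma> l) $$ (p,q))"
        using p' q' by (simp add: g'_def)
      also have "\<dots> = (\<Sum>l<c. b (\<sigma> l) * g (\<sigma> l) $$ (p,q))"
        using bl0 last by (subst (2) cS) (simp)
      also have "\<dots> = (\<Sum>l<c. b l * g l $$ (p,q))" by (rule reidx)
      also have "\<dots> = (\<Sum>l<c. a l * g l $$ (p,q)) - \<tau> * (\<Sum>l<c. a0 l * g l $$ (p,q))"
        by (simp add: b_def algebra_simps sum_subtractf sum_distrib_left)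
      finally have e3: "(\<Sum>l<c - 1. b (\<sigma> l) * g' l $$ (p,q)) = (\<Sum>l<c. a l * g l $$ (p,q)) - \<tau> * (\<Sum>l<c. a0 l * g l $$ (p,q))" .
      have "(pim n k v1 + lc n k (c - 1) g' (\<lambda>l. b (\<sigma> l))) $$ (p,q) = v1 $$ (p,q) + (\<Sum>l<c - 1. b (\<sigma> l) * g' l $$ (p,q))"
        using p' q' by simp
      also have "v1 $$ (p,q) = v $$ (p,q) - \<tau> * v0 $$ (p,q)" using vc p' q' by (simp add: v1_def)
      finally have e4: "(pim n k v1 + lc n k (c - 1) g' (\<lambda>l. b (\<sigma> l))) $$ (p,q) = v $$ (p,q) - \<tau> * v0 $$ (p,q) + (\<Sum>l<c - 1. b (\<sigma> l) * g' l $$ (p,q))" .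
      show "Y $$ (p,q) = (pim n k v1 + lc n k (c - 1) g' (\<lambda>l. b (\<sigma> l))) $$ (p,q)"
      proof -
        have e2': "v0 $$ (p,q) = - (\<Sum>l<c. a0 l * g l $$ (p,q))" using e2 by (simp add: eq_neg_iff_add_eq_0)
        show ?thesis unfolding e4 e1 e3 e2' by (simp add: algebra_simps)
      qed
    qed (use Y in auto)
    then show "\<exists>v\<in>pim n k ` V. \<exists>a. Y = v + lc n k (c - 1) g' a" using v1V by blast
  qed
  then show ?thesis using l0 by auto
qed


lemma step:
  fixes V :: "'a :: field mat set"
  assumes IH: "\<And>n V c g s. k \<le> n \<Longrightarrow> closedV n k V \<Longrightarrow> c \<le> k - 1 \<Longrightarrow> SC n k V c g \<Longrightarrow>
      s \<in> carrier_mat n k \<Longrightarrow> \<exists>v\<in>V. cullis_det n k (s + v) \<noteq> (0 :: 'a)"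
    and kn: "k \<le> n" and cl: "closedV (Suc n) (Suc k) V" and sc: "SC (Suc n) (Suc k) V c g"
    and ck: "c \<le> k" and s: "s \<in> carrier_mat (Suc n) (Suc k)"
    and corner: "unitm (Suc n) (Suc k) n k \<in> V"
    and cond: "c \<le> k - 1 \<or> (\<exists>i j. i < Suc n \<and> j < Suc k \<and> (i = n \<or> j = k) \<and> unitm (Suc n) (Suc k) i j \<notin> V)"
  shows "\<exists>v\<in>V. cullis_det (Suc n) (Suc k) (s + v) \<noteq> 0"
proof -
  have VC: "x \<in> V \<Longrightarrow> x \<in> carrier_mat (Suc n) (Suc k)" for x using cl closedV_sub by blast
  obtain c' g' where c': "c' \<le> k - 1" "SC n k (pim n k ` V) c' g'"
  proof (cases "c \<le> k - 1")
    case True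
    then show ?thesis using that projA[OF cl sc] by blast
  next
    case False
    then obtain i j where "i < Suc n" "j < Suc k" "i = n \<or> j = k" "unitm (Suc n) (Suc k) i j \<notin> V"
      using cond by blast
    from projB[OF cl sc this] obtain g' where "0 < c" "SC n k (pim n k ` V) (c - 1) g'" by blast
    moreover have "c - 1 \<le> k - 1" using ck by simp
    ultimately show ?thesis using that by blast
  qed
  from IH[OF kn pim_closed[OF cl] c'(1) c'(2) pim_carrier]
  obtain u where u: "u \<in> pim n k ` V" "cullis_det n k (pim n k s + u) \<noteq> 0" by blast
  then obtain v where v: "v \<in> V" "u = pim n k v" by blast
  have vc: "v \<in> carrier_mat (Suc n) (Suc k)" using VC v(1) .
  define X where "X = s + v"
  have X: "X \<in> carrier_mat (Suc n) (Suc k)" using s vc by (simp add: X_def)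
  have D: "cullis_det n k (pim n k X) \<noteq> 0" using u v pim_add[OF s vc] by (simp add: X_def)
  show ?thesis
  proof (cases "cullis_det (Suc n) (Suc k) X = 0")
    case False
    then show ?thesis using v(1) X_def by blast
  next
    case True
    let ?E = "unitm (Suc n) (Suc k) n k"
    have v'V: "v + 1 \<cdot>\<^sub>m ?E \<in> V" using cl v(1) corner unfolding closedV_def by blast
    have "s + (v + 1 \<cdot>\<^sub>m ?E) = X + 1 \<cdot>\<^sub>m ?E" unfolding X_def using s vc by (simp add: assoc_add_mat)
    then have "cullis_det (Suc n) (Suc k) (s + (v + 1 \<cdot>\<^sub>m ?E)) = (-1)^(n-k) * cullis_det n k (pim n k X)"
      using cdet_corner[OF X kn, of 1] True by simp
    also have "\<dots> \<noteq> 0" using D by simp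
    finally show ?thesis using v'V by blast
  qed
qed


lemma rowm_cong: "(\<And>b. b < k \<Longrightarrow> w b = w' b) \<Longrightarrow> rowm n k i w = rowm n k i w'"
  by (intro eq_matI) (auto simp: rowm_def)

lemma with_B:
  fixes V :: "'a :: field mat set"
  assumes IH: "\<And>n V c g s. k \<le> n \<Longrightarrow> closedV n k V \<Longrightarrow> c \<le> k - 1 \<Longrightarrow> SC n k V c g \<Longrightarrow>
      s \<in> carrier_mat n k \<Longrightarrow> \<exists>v\<in>V. cullis_det n k (s + v) \<noteq> (0 :: 'a)"
    and kn: "k \<le> n" and cl: "closedV (Suc n) (Suc k) V" and sc: "SC (Suc n) (Suc k) V c g"
    and ck: "c \<le> k" and s: "s \<in> carrier_mat (Suc n) (Suc k)"
    and B: "B \<in> carrier_mat (Suc k) (Suc k)" and P: "P \<in> carrier_mat (Suc k) (Suc k)"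
    and BP: "B * P = 1\<^sub>m (Suc k)" and PB: "P * B = 1\<^sub>m (Suc k)"
    and Brow: "\<forall>b<Suc k. B $$ (k, b) = w b" and rowV: "rowm (Suc n) (Suc k) n w \<in> V"
    and cond: "c \<le> k - 1 \<or> (\<exists>i j. i < Suc n \<and> j < Suc k \<and> (i = n \<or> j = k) \<and> unitm (Suc n) (Suc k) i j * B \<notin> V)"
  shows "\<exists>v\<in>V. cullis_det (Suc n) (Suc k) (s + v) \<noteq> 0"
proof -
  let ?V = "(\<lambda>X. X * P) ` V"
  have cl': "closedV (Suc n) (Suc k) ?V" by (rule transform_closed[OF cl P])
  have sc': "SC (Suc n) (Suc k) ?V c (tg (Suc n) (Suc k) P g)" by (rule transform_SC[OF cl sc B P BP])
  have s': "s * P \<in> carrier_mat (Suc n) (Suc k)" using s P by simp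
  have mem: "X \<in> ?V \<longleftrightarrow> X * B \<in> V" if "X \<in> carrier_mat (Suc n) (Suc k)" for X
    by (rule transform_mem[OF cl B P BP PB that])
  have "unitm (Suc n) (Suc k) n k * B = rowm (Suc n) (Suc k) n (\<lambda>b. B $$ (k, b))"
    by (rule unitm_mult[OF B]) simp
  also have "\<dots> = rowm (Suc n) (Suc k) n w" using Brow by (intro rowm_cong) simp
  finally have corner: "unitm (Suc n) (Suc k) n k \<in> ?V" using mem[OF unitm_carrier] rowV by simp
  have cond': "c \<le> k - 1 \<or> (\<exists>i j. i < Suc n \<and> j < Suc k \<and> (i = n \<or> j = k) \<and> unitm (Suc n) (Suc k) i j \<notin> ?V)"
  proof (cases "c \<le> k - 1")
    case False
    then obtain i j where ij: "i < Suc n" "j < Suc k" "i = n \<or> j = k" "unitm (Suc n) (Suc k) i j * B \<notin> V"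
      using cond by blast
    then have "unitm (Suc n) (Suc k) i j \<notin> ?V" using mem[OF unitm_carrier] by simp
    then show ?thesis using ij by blast
  qed simp
  from step[OF IH kn cl' sc' ck s' corner cond']
  show ?thesis by (rule transform_back[OF cl s P])
qed


lemma all_units:
  fixes V :: "'a :: field mat set"
  assumes cl: "closedV n k V" and units: "\<And>i j. i < n \<Longrightarrow> j < k \<Longrightarrow> unitm n k i j \<in> V"
    and Y: "Y \<in> carrier_mat n k"
  shows "Y \<in> V"
proof -
  let ?f = "\<lambda>l. Y $$ (l div k, l mod k) \<cdot>\<^sub>m unitm n k (l div k) (l mod k)"
  have fV: "?f l \<in> V" if "l < n * k" for l
  proof -
    have k0: "k > 0" using that by (cases k) auto
    have "l div k < n" using that by (rule less_mult_imp_div_less)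
    moreover have "l mod k < k" using k0 by simp
    ultimately have u: "unitm n k (l div k) (l mod k) \<in> V" by (rule units)
    have sm: "\<And>a x. x \<in> V \<Longrightarrow> a \<cdot>\<^sub>m x \<in> V" using cl unfolding closedV_def by blast
    show ?thesis by (rule sm[OF u])
  qed
  have "msum n k ?f (n * k) = Y"
  proof (rule eq_matI)
    fix r q assume r: "r < dim_row Y" and q: "q < dim_col Y"
    then have r': "r < n" and q': "q < k" using Y by auto
    have "msum n k ?f (n * k) $$ (r,q) = (\<Sum>l<n * k. ?f l $$ (r,q))"
      by (rule msum_index) (use r' q' in auto)
    also have "\<dots> = (\<Sum>l\<in>{..<n * k}. if l = r * k + q then Y $$ (r,q) else 0)"
    proof (intro sum.cong refl)
      fix l assume "l \<in> {..<n * k}"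
      have iff: "(r = l div k \<and> q = l mod k) \<longleftrightarrow> l = r * k + q"
      proof
        assume h: "r = l div k \<and> q = l mod k"
        have "l div k * k + l mod k = l" by (rule div_mult_mod_eq)
        then show "l = r * k + q" using h by simp
      next
        assume "l = r * k + q"
        then show "r = l div k \<and> q = l mod k" using q' by simp
      qed
      have e: "?f l $$ (r,q) = Y $$ (l div k, l mod k) * (if r = l div k \<and> q = l mod k then 1 else 0)"
        using r' q' by (simp add: unitm_def)
      show "?f l $$ (r,q) = (if l = r * k + q then Y $$ (r,q) else 0)"
      proof -
        have h: "(r * k + q) div k = r" "q mod k = q" using q' by auto
        show ?thesis unfolding e iff using h by auto
      qed
    qed
    also have "\<dots> = Y $$ (r,q)"
    proof -
      have "r * k + q < n * k"
      proof -
        have "r * k + q < r * k + k" using q' by simp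
        also have "\<dots> = Suc r * k" by simp
        also have "\<dots> \<le> n * k" using r' by (intro mult_right_mono) auto
        finally show ?thesis .
      qed
      then show ?thesis by (simp only: sum.delta finite_lessThan lessThan_iff if_True)
    qed
    finally show "msum n k ?f (n * k) $$ (r,q) = Y $$ (r,q)" .
  next
    have "msum n k ?f (n * k) \<in> carrier_mat n k" by (rule msum_carrier) simp
    then show "dim_row (msum n k ?f (n * k)) = dim_row Y" "dim_col (msum n k ?f (n * k)) = dim_col Y"
      using Y by auto
  qed
  moreover have "msum n k ?f (n * k) \<in> V" by (rule msum_closed[OF cl fV])
  ultimately show ?thesis by simp
qed


lemma rowm_unit: "rowm n k i (\<lambda>b. if b = j then 1 else 0) = unitm n k i j"
  by (intro eq_matI) (auto simp: rowm_def unitm_def)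

lemma row_back:
  fixes V :: "'a :: field mat set"
  assumes cl: "closedV n k V" and B: "B \<in> carrier_mat k k" and P: "P \<in> carrier_mat k k"
    and PB: "P * B = 1\<^sub>m k" and m: "m < k" and i: "i < n"
    and all: "\<And>j. j < k \<Longrightarrow> unitm n k i j * B \<in> V"
  shows "unitm n k i m \<in> V"
proof -
  let ?f = "\<lambda>j. P $$ (m,j) \<cdot>\<^sub>m (unitm n k i j * B)"
  have sm: "\<And>a x. x \<in> V \<Longrightarrow> a \<cdot>\<^sub>m x \<in> V" using cl unfolding closedV_def by blast
  have fV: "?f j \<in> V" if "j < k" for j by (rule sm[OF all[OF that]])
  have fC: "?f j \<in> carrier_mat n k" if "j < k" for j
    by (intro smult_carrier_mat mult_carrier_mat[OF unitm_carrier B])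
  have "msum n k ?f k = unitm n k i m"
  proof (rule eq_matI)
    fix r q assume r: "r < dim_row (unitm n k i m)" and q: "q < dim_col (unitm n k i m)"
    then have r': "r < n" and q': "q < k" by auto
    have "msum n k ?f k $$ (r,q) = (\<Sum>j<k. ?f j $$ (r,q))" by (rule msum_index[OF fC r' q'])
    also have "\<dots> = (\<Sum>j<k. P $$ (m,j) * (if r = i then B $$ (j,q) else 0))"
    proof (intro sum.cong refl)
      fix j assume "j \<in> {..<k}"
      then have j: "j < k" by simp
      show "?f j $$ (r,q) = P $$ (m,j) * (if r = i then B $$ (j,q) else 0)"
        unfolding unitm_mult[OF B j] using r' q' by (simp add: rowm_def)
    qed
    also have "\<dots> = (if r = i then (P * B) $$ (m,q) else 0)"
      using P B m q' by (simp add: scalar_prod_def atLeast0LessThan)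
    also have "\<dots> = unitm n k i m $$ (r,q)" using PB m q' r' by (simp add: unitm_def)
    finally show "msum n k ?f k $$ (r,q) = unitm n k i m $$ (r,q)" .
  next
    have "msum n k ?f k \<in> carrier_mat n k" by (rule msum_carrier[OF fC])
    then show "dim_row (msum n k ?f k) = dim_row (unitm n k i m)" "dim_col (msum n k ?f k) = dim_col (unitm n k i m)" by auto
  qed
  moreover have "msum n k ?f k \<in> V" by (rule msum_closed[OF cl fV])
  ultimately show ?thesis by simp
qed

lemma core:
  shows "\<And>n V c g s. k \<le> n \<Longrightarrow> closedV n k V \<Longrightarrow> c \<le> k - 1 \<Longrightarrow> SC n k V c g \<Longrightarrow>
      s \<in> carrier_mat n k \<Longrightarrow> \<exists>v\<in>V. cullis_det n k (s + v) \<noteq> (0 :: 'a :: field)"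
proof (induction k)
  case (0 n V c g s)
  have "0\<^sub>m n 0 \<in> V" using "0.prems"(2) unfolding closedV_def by blast
  moreover have "cullis_det n 0 (s + 0\<^sub>m n 0) \<noteq> (0 :: 'a)" by (simp add: cdet_zero)
  ultimately show ?case by blast
next
  case (Suc k n V c g s)
  note IH = Suc.IH
  obtain n' where n: "n = Suc n'" using Suc.prems(1) by (cases n) auto
  have kn: "k \<le> n'" using Suc.prems(1) n by simp
  have cl: "closedV (Suc n') (Suc k) V" using Suc.prems(2) n by simp
  have sc: "SC (Suc n') (Suc k) V c g" using Suc.prems(4) n by simp
  have ck: "c \<le> k" using Suc.prems(3) by simp
  have s: "s \<in> carrier_mat (Suc n') (Suc k)" using Suc.prems(5) n by simp
  have caseS: "\<exists>v\<in>V. cullis_det (Suc n') (Suc k) (s + v) \<noteq> 0"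
    if hc1: "c1 \<le> k - 1" and sc1: "SC (Suc n') (Suc k) V c1 g1" for c1 g1
  proof -
    have c1k: "c1 < Suc k" "c1 \<le> k" using hc1 by auto
    obtain w where w: "\<exists>m<Suc k. w m \<noteq> 0" "rowm (Suc n') (Suc k) n' w \<in> V"
      using row_dir[OF cl sc1 c1k(1), of n'] by auto
    then obtain m0 where m0: "m0 < Suc k" "w m0 \<noteq> 0" by blast
    obtain B P where BP: "B \<in> carrier_mat (Suc k) (Suc k)" "P \<in> carrier_mat (Suc k) (Suc k)"
      "B * P = 1\<^sub>m (Suc k)" "P * B = 1\<^sub>m (Suc k)" "\<forall>b<Suc k. B $$ (k, b) = w b"
      using mkB[of m0 k w] m0 by blast
    show ?thesis
      apply (rule with_B[OF _ kn cl sc1 c1k(2) s BP w(2)])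
      subgoal by (rule IH)
      subgoal by (rule disjI1[OF hc1])
      done
  qed
  show ?case unfolding n
  proof (cases "c \<le> k - 1")
    case True
    then show "\<exists>v\<in>V. cullis_det (Suc n') (Suc k) (s + v) \<noteq> 0" using caseS sc by blast
  next
    case False
    show "\<exists>v\<in>V. cullis_det (Suc n') (Suc k) (s + v) \<noteq> 0"
    proof (cases "\<forall>Y\<in>carrier_mat (Suc n') (Suc k). Y \<in> V")
      case True
      have "SC (Suc n') (Suc k) V 0 g"
        unfolding SC_def
      proof
        fix Y :: "'a mat" assume Y: "Y \<in> carrier_mat (Suc n') (Suc k)"
        have "lc (Suc n') (Suc k) 0 g (\<lambda>_. 0) = 0\<^sub>m (Suc n') (Suc k)" by (intro eq_matI) auto
        then have "Y = Y + lc (Suc n') (Suc k) 0 g (\<lambda>_. 0)" using Y by simp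
        then show "\<exists>v\<in>V. \<exists>a. Y = v + lc (Suc n') (Suc k) 0 g a" using True Y by blast
      qed
      then show ?thesis using caseS[of 0] by simp
    next
      case notall: False
      have "\<exists>i j. i < Suc n' \<and> j < Suc k \<and> unitm (Suc n') (Suc k) i j \<notin> V"
      proof (rule ccontr)
        assume "\<not> (\<exists>i j. i < Suc n' \<and> j < Suc k \<and> unitm (Suc n') (Suc k) i j \<notin> V)"
        then have "\<And>i j. i < Suc n' \<Longrightarrow> j < Suc k \<Longrightarrow> unitm (Suc n') (Suc k) i j \<in> V" by blast
        then have "\<forall>Y\<in>carrier_mat (Suc n') (Suc k). Y \<in> V" using all_units[OF cl] by blast
        then show False using notall by simp
      qed
      then obtain i j where ij: "i < Suc n'" "j < Suc k" "unitm (Suc n') (Suc k) i j \<notin> V" by blast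
      have ck1: "c < Suc k" using ck by simp
      show ?thesis
      proof (cases "\<exists>m<Suc k. unitm (Suc n') (Suc k) n' m \<notin> V")
        case True
        then obtain m where m: "m < Suc k" "unitm (Suc n') (Suc k) n' m \<notin> V" by blast
        obtain w where w: "\<exists>m<Suc k. w m \<noteq> 0" "rowm (Suc n') (Suc k) n' w \<in> V"
          using row_dir[OF cl sc ck1, of n'] by auto
        then obtain m0 where m0: "m0 < Suc k" "w m0 \<noteq> 0" by blast
        obtain B P where BP: "B \<in> carrier_mat (Suc k) (Suc k)" "P \<in> carrier_mat (Suc k) (Suc k)"
          "B * P = 1\<^sub>m (Suc k)" "P * B = 1\<^sub>m (Suc k)" "\<forall>b<Suc k. B $$ (k, b) = w b"
          using mkB[of m0 k w] m0 by blast
        have "\<exists>j'. j' < Suc k \<and> unitm (Suc n') (Suc k) n' j' * B \<notin> V"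
        proof (rule ccontr)
          assume "\<not> (\<exists>j'. j' < Suc k \<and> unitm (Suc n') (Suc k) n' j' * B \<notin> V)"
          then have "\<And>j'. j' < Suc k \<Longrightarrow> unitm (Suc n') (Suc k) n' j' * B \<in> V" by blast
          from row_back[OF cl BP(1) BP(2) BP(4) m(1) _ this] m(2) show False by simp
        qed
        then have cond: "c \<le> k - 1 \<or> (\<exists>i j. i < Suc n' \<and> j < Suc k \<and> (i = n' \<or> j = k) \<and> unitm (Suc n') (Suc k) i j * B \<notin> V)"
          by blast
        show ?thesis
          apply (rule with_B[OF _ kn cl sc ck s BP w(2) cond])
          by (rule IH)
      next
        case False
        let ?w = "\<lambda>b. if b = j then (1 :: 'a) else 0"
        have rowV: "rowm (Suc n') (Suc k) n' ?w \<in> V" unfolding rowm_unit using False ij(2) by blast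
        obtain B P where BP: "B \<in> carrier_mat (Suc k) (Suc k)" "P \<in> carrier_mat (Suc k) (Suc k)"
          "B * P = 1\<^sub>m (Suc k)" "P * B = 1\<^sub>m (Suc k)" "\<forall>b<Suc k. B $$ (k, b) = ?w b"
          using mkB[of j k ?w] ij(2) by auto
        have "unitm (Suc n') (Suc k) i k * B = rowm (Suc n') (Suc k) i (\<lambda>b. B $$ (k, b))"
          by (rule unitm_mult[OF BP(1)]) simp
        also have "\<dots> = rowm (Suc n') (Suc k) i ?w" using BP(5) by (intro rowm_cong) simp
        also have "\<dots> = unitm (Suc n') (Suc k) i j" by (rule rowm_unit)
        finally have "unitm (Suc n') (Suc k) i k * B \<notin> V" using ij(3) by simp
        then have cond: "c \<le> k - 1 \<or> (\<exists>i' j'. i' < Suc n' \<and> j' < Suc k \<and> (i' = n' \<or> j' = k) \<and> unitm (Suc n') (Suc k) i' j' * B \<notin> V)"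
          using ij(1) by blast
        show ?thesis
          apply (rule with_B[OF _ kn cl sc ck s BP rowV cond])
          by (rule IH)
      qed
    qed
  qed
qed


lemma subspace_closedV:
  fixes V :: "'a :: field mat set"
  assumes "VectorSpace.subspace (class_ring :: 'a ring) V (module_mat TYPE('a) n k)"
  shows "closedV n k V"
proof -
  from assms have sm: "submodule class_ring V (module_mat TYPE('a) n k)"
    unfolding VectorSpace.subspace_def by auto
  have 1: "V \<subseteq> carrier_mat n k" using sm unfolding submodule_def by (simp add: module_mat_simps)
  have 2: "0\<^sub>m n k \<in> V" using sm unfolding submodule_def by (simp add: module_mat_simps)
  have 3: "\<forall>x\<in>V. \<forall>y\<in>V. x + y \<in> V" using sm unfolding submodule_def by (simp add: module_mat_simps)
  have 4: "\<forall>a. \<forall>x\<in>V. a \<cdot>\<^sub>m x \<in> V" using sm unfolding submodule_def by (simp add: module_mat_simps)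
  show ?thesis unfolding closedV_def using 1 2 3 4 by blast
qed


lemma finsum_mat:
  fixes f :: "'b \<Rightarrow> 'a :: field mat"
  assumes fin: "finite A"
  shows "f \<in> A \<rightarrow> carrier_mat n k \<Longrightarrow> finsum (module_mat TYPE('a) n k) f A \<in> carrier_mat n k \<and>
    (\<forall>i<n. \<forall>j<k. finsum (module_mat TYPE('a) n k) f A $$ (i,j) = (\<Sum>x\<in>A. f x $$ (i,j)))"
  using fin
proof (induction A rule: finite_induct)
  case empty
  interpret mv: matrix_vs n k "TYPE('a)" .
  show ?case by simp
next
  case (insert a F)
  interpret mv: matrix_vs n k "TYPE('a)" .
  have fF: "f \<in> F \<rightarrow> carrier_mat n k" and fa: "f a \<in> carrier_mat n k" using insert.prems by auto
  have eq: "finsum (module_mat TYPE('a) n k) f (insert a F) = f a + finsum (module_mat TYPE('a) n k) f F"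
    by (rule mv.finsum_insert[OF insert.hyps(1) insert.hyps(2) fF fa])
  from insert.IH[OF fF] have IH: "finsum (module_mat TYPE('a) n k) f F \<in> carrier_mat n k"
    "\<And>i j. i < n \<Longrightarrow> j < k \<Longrightarrow> finsum (module_mat TYPE('a) n k) f F $$ (i,j) = (\<Sum>x\<in>F. f x $$ (i,j))" by auto
  show ?case unfolding eq using IH fa insert.hyps by auto
qed

lemma lincomb_lc:
  fixes C :: "'a :: field mat set"
  assumes C: "C \<subseteq> carrier_mat n k" and gs: "distinct gs" "set gs = C"
  shows "module.lincomb (module_mat TYPE('a) n k) a C = lc n k (length gs) (\<lambda>l. gs ! l) (\<lambda>l. a (gs ! l))"
proof -
  interpret mv: matrix_vs n k "TYPE('a)" .
  have fin: "finite C" using gs by auto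
  have f: "(\<lambda>v. a v \<cdot>\<^sub>m v) \<in> C \<rightarrow> carrier_mat n k" using C by auto
  have L: "mv.lincomb a C = finsum (module_mat TYPE('a) n k) (\<lambda>v. a v \<cdot>\<^sub>m v) C"
    unfolding mv.lincomb_def by simp
  note fm = finsum_mat[OF fin f]
  have bij: "bij_betw ((!) gs) {..<length gs} C" by (rule bij_betw_nth) (use gs in auto)
  show ?thesis unfolding L
  proof (rule eq_matI)
    fix i j assume i: "i < dim_row (lc n k (length gs) ((!) gs) (\<lambda>l. a (gs ! l)))"
      and j: "j < dim_col (lc n k (length gs) ((!) gs) (\<lambda>l. a (gs ! l)))"
    then have i': "i < n" and j': "j < k" by auto
    have "finsum (module_mat TYPE('a) n k) (\<lambda>v. a v \<cdot>\<^sub>m v) C $$ (i,j) = (\<Sum>v\<in>C. (a v \<cdot>\<^sub>m v) $$ (i,j))"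
      using fm i' j' by blast
    also have "\<dots> = (\<Sum>v\<in>C. a v * v $$ (i,j))"
      using C i' j' by (intro sum.cong) auto
    also have "\<dots> = (\<Sum>l<length gs. a (gs ! l) * (gs ! l) $$ (i,j))"
      using sum.reindex_bij_betw[OF bij, of "\<lambda>v. a v * v $$ (i,j)"] by simp
    also have "\<dots> = lc n k (length gs) ((!) gs) (\<lambda>l. a (gs ! l)) $$ (i,j)" using i' j' by simp
    finally show "finsum (module_mat TYPE('a) n k) (\<lambda>v. a v \<cdot>\<^sub>m v) C $$ (i,j) = lc n k (length gs) ((!) gs) (\<lambda>l. a (gs ! l)) $$ (i,j)" .
  qed (use fm in auto)
qed


lemma dim_SC:
  fixes V :: "'a :: field mat set"
  assumes sub: "VectorSpace.subspace (class_ring :: 'a ring) V (module_mat TYPE('a) n k)"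
  shows "\<exists>c g. c + vectorspace.dim (class_ring :: 'a ring) ((module_mat TYPE('a) n k)\<lparr>carrier := V\<rparr>) \<le> n * k
     \<and> SC n k V c g"
proof -
  interpret mv: matrix_vs n k "TYPE('a)" .
  let ?U = "(\<lambda>(i,j). unitm n k i j :: 'a mat) ` ({..<n} \<times> {..<k})"
  have Ufin: "finite ?U" by simp
  have Ucard: "card ?U \<le> n * k"
    using card_image_le[of "{..<n} \<times> {..<k}" "\<lambda>(i,j). unitm n k i j :: 'a mat"] by (simp add: card_cartesian_product)
  have UC: "?U \<subseteq> carrier_mat n k" by auto
  have spanU: "mv.span ?U = carrier_mat n k"
  proof
    show "mv.span ?U \<subseteq> carrier_mat n k" using mv.span_is_subset2[OF UC] by simp
    have clS: "closedV n k (mv.span ?U)" by (rule subspace_closedV[OF mv.span_is_subspace[OF UC]])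
    have units: "unitm n k i j \<in> mv.span ?U" if "i < n" "j < k" for i j
      using mv.in_own_span[OF UC] that by blast
    show "carrier_mat n k \<subseteq> mv.span ?U" using all_units[OF clS units] by blast
  qed
  have fd: "mv.fin_dim" unfolding mv.fin_dim_def using Ufin UC spanU by blast
  have submod: "submodule class_ring V (module_mat TYPE('a) n k)"
    using sub unfolding VectorSpace.subspace_def by auto
  have VC: "V \<subseteq> carrier_mat n k" using subspace_closedV[OF sub] unfolding closedV_def by blast
  let ?P = "\<lambda>A. A \<subseteq> V \<and> mv.lin_indpt A"
  have maxc: "finite A \<and> card A \<le> n * k" if "?P A" for A
  proof -
    have AC: "A \<subseteq> carrier_mat n k" using that VC by blast
    have fA: "finite A" using mv.fin_dim_li_fin[OF fd _ AC] that by blast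
    have "card A \<le> card ?U" using mv.li_smaller_than_gen[OF fA Ufin AC UC _ spanU] that by blast
    then show ?thesis using fA Ucard by simp
  qed
  have P0: "?P {}" by (simp add: mv.lin_dep_def)
  obtain \<beta> where \<beta>: "finite \<beta>" "maximal \<beta> ?P" using maximal_exists[of ?P "n * k" "{}", OF maxc P0] by blast
  have \<beta>V: "\<beta> \<subseteq> V" and \<beta>li: "mv.lin_indpt \<beta>" using \<beta>(2) unfolding maximal_def by auto
  have \<beta>C: "\<beta> \<subseteq> carrier_mat n k" using \<beta>V VC by blast
  have Vspan: "V \<subseteq> mv.span \<beta>"
  proof
    fix v assume v: "v \<in> V"
    show "v \<in> mv.span \<beta>"
    proof (rule ccontr)
      assume nv: "v \<notin> mv.span \<beta>"
      then have vn: "v \<notin> \<beta>" using mv.in_own_span[OF \<beta>C] by blast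
      have vC: "v \<in> carrier_mat n k" using v VC by blast
      have "mv.lin_indpt (\<beta> \<union> {v})" using mv.lin_dep_iff_in_span[OF \<beta>C \<beta>li _ vn] vC nv by simp
      then have "?P (\<beta> \<union> {v})" using \<beta>V v by simp
      then have "\<beta> \<union> {v} = \<beta>" using \<beta>(2) unfolding maximal_def by blast
      then show False using vn by blast
    qed
  qed
  have spanV: "mv.span \<beta> \<subseteq> V" by (rule mv.span_is_subset[OF \<beta>V submod])
  have vsV: "vectorspace class_ring ((module_mat TYPE('a) n k)\<lparr>carrier := V\<rparr>)"
    by (rule mv.subspace_is_vs[OF sub])
  have gen: "LinearCombinations.module.span class_ring ((module_mat TYPE('a) n k)\<lparr>carrier := V\<rparr>) \<beta> = V"
    using mv.span_li_not_depend(1)[OF \<beta>V submod] Vspan spanV by simp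
  have dimle: "vectorspace.dim class_ring ((module_mat TYPE('a) n k)\<lparr>carrier := V\<rparr>) \<le> card \<beta>"
    by (rule vectorspace.gen_ge_dim[OF vsV \<beta>(1)]) (use \<beta>V gen in auto)
  have \<beta>U: "\<beta> \<subseteq> mv.span ?U" using \<beta>C spanU by simp
  obtain C where C: "finite C" "C \<subseteq> carrier_mat n k" "int (card C) \<le> int (card ?U) - int (card \<beta>)"
    "mv.span (\<beta> \<union> C) = mv.span ?U"
    using mv.replacement[OF \<beta>(1) Ufin UC \<beta>li \<beta>U] by auto
  obtain gs where gs: "distinct gs" "set gs = C" using finite_distinct_list[OF C(1)] by blast
  have lgs: "length gs = card C" using gs distinct_card by metis
  have SCV: "SC n k V (length gs) (\<lambda>l. gs ! l)"
    unfolding SC_def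
  proof
    fix Y :: "'a mat" assume Y: "Y \<in> carrier_mat n k"
    then have "Y \<in> mv.span (\<beta> \<union> C)" using C(4) spanU by simp
    also have "mv.span (\<beta> \<union> C) = mv.submodule_sum (mv.span \<beta>) (mv.span C)"
      by (rule mv.span_union_is_sum[OF \<beta>C C(2)])
    finally obtain x y where xy: "x \<in> mv.span \<beta>" "y \<in> mv.span C" "Y = x + y"
      unfolding mv.submodule_sum_def by auto
    from xy(2) obtain a where a: "y = mv.lincomb a C" using mv.finite_span[OF C(1) C(2)] by auto
    have "y = lc n k (length gs) (\<lambda>l. gs ! l) (\<lambda>l. a (gs ! l))"
      unfolding a by (rule lincomb_lc[OF C(2) gs])
    then show "\<exists>v\<in>V. \<exists>a. Y = v + lc n k (length gs) ((!) gs) a" using xy spanV by blast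
  qed
  have "length gs + card \<beta> \<le> n * k" using C(3) Ucard lgs by linarith
  then show ?thesis using SCV dimle by (intro exI[of _ "length gs"] exI[of _ "\<lambda>l. gs ! l"]) auto
qed


theorem mainTheorem2:
  fixes n k :: nat and s :: "'a :: field mat" and V :: "'a mat set"
  assumes "1 \<le> k" and "k \<le> n"
    and "VectorSpace.subspace (class_ring :: 'a ring) V (module_mat TYPE('a) n k)"
    and "s \<in> carrier_mat n k"
    and "\<forall>X \<in> (\<lambda>v. s + v) ` V. cullis_det n k X = 0"
  shows "codim_mat TYPE('a) n k V \<ge> k"
proof (rule ccontr)
  assume neg: "\<not> k \<le> codim_mat TYPE('a) n k V"
  obtain c g where cg: "c + vectorspace.dim (class_ring :: 'a ring) ((module_mat TYPE('a) n k)\<lparr>carrier := V\<rparr>) \<le> n * k"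
    "SC n k V c g" using dim_SC[OF assms(3)] by blast
  have "c \<le> k - 1" using neg cg(1) unfolding codim_mat_def by linarith
  from core[OF assms(2) subspace_closedV[OF assms(3)] this cg(2) assms(4)]
  obtain v where "v \<in> V" "cullis_det n k (s + v) \<noteq> 0" by blast
  then show False using assms(5) by blast
qed


end
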